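(* Let $\varphi_A(X):=\sum_{i=1}^nA_iXA_i^*$ ($n\in\mathbb N$ or $n=\infty$) be a $w^*$-continuous completely positive linear map on $B(\mathcal H)$ with $\|\varphi_A\|\le1$, and let $\varphi_A^\infty(I):=\text{SOT-}\lim_{k\to\infty}\varphi_A^k(I)$ (which exists). Then $\ker(I-\varphi_A^\infty(I))$ and $\ker\varphi_A^\infty(I)$ are mutually orthogonal, so that $\mathcal H=\mathcal M\oplus\ker(I-\varphi_A^\infty(I))\oplus\ker\varphi_A^\infty(I)$ with $\mathcal M$ the orthogonal complement of the other two, and the subspaces $\ker(I-\varphi_A^\infty(I))$ and $\ker\varphi_A^\infty(I)$ are invariant under each $A_i^*$. If in addition $\varphi_A^\infty(I)$ is an orthogonal projection, then $\mathcal H=\ker(I-\varphi_A^\infty(I))\oplus\ker\varphi_A^\infty(I)$ and both subspaces are reducing for each $A_i$. *)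

theory Defs
  imports "HOL-Analysis.Analysis"
begin

text \<open>The distribution has no complex Hilbert spaces, so we introduce them as a type class.
  The inner product is conjugate-linear in the first and linear in the second argument.\<close>

class complex_inner = real_normed_vector +
  fixes cscale :: "complex \<Rightarrow> 'a \<Rightarrow> 'a"
    and cinner :: "'a \<Rightarrow> 'a \<Rightarrow> complex"
  assumes cscale_add_right: "cscale a (x + y) = cscale a x + cscale a y"
    and cscale_add_left: "cscale (a + b) x = cscale a x + cscale b x"
    and cscale_cscale: "cscale a (cscale b x) = cscale (a * b) x"
    and cscale_one: "cscale 1 x = x"
    and cscale_of_real: "cscale (complex_of_real r) x = scaleR r x"
    and cinner_commute: "cinner x y = cnj (cinner y x)"
    and cinner_add_right: "cinner x (y + z) = cinner x y + cinner x z"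
    and cinner_cscale_right: "cinner x (cscale a y) = a * cinner x y"
    and cinner_eq_zero_iff: "cinner x x = 0 \<longleftrightarrow> x = 0"
    and cinner_nonneg: "0 \<le> Re (cinner x x)"
    and norm_eq_sqrt_cinner: "norm x = sqrt (Re (cinner x x))"

class chilbert_space = complex_inner + complete_space

instantiation complex :: chilbert_space
begin
definition cscale_complex :: "complex \<Rightarrow> complex \<Rightarrow> complex" where
  "cscale_complex a x = a * x"
definition cinner_complex :: "complex \<Rightarrow> complex \<Rightarrow> complex" where
  "cinner_complex x y = cnj x * y"
instance
proof
  fix x :: complex
  show "norm x = sqrt (Re (cinner x x))"
    by (simp add: cinner_complex_def cmod_def power2_eq_square)
qed (auto simp: cscale_complex_def cinner_complex_def algebra_simps scaleR_conv_of_real)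
end

definition bounded_op :: "('a::complex_inner \<Rightarrow> 'a) \<Rightarrow> bool" where
  "bounded_op T \<longleftrightarrow> bounded_linear T \<and> (\<forall>c x. T (cscale c x) = cscale c (T x))"

definition is_adjoint :: "('a::complex_inner \<Rightarrow> 'a) \<Rightarrow> ('a \<Rightarrow> 'a) \<Rightarrow> bool" where
  "is_adjoint T S \<longleftrightarrow> (\<forall>x y. cinner (T x) y = cinner x (S y))"

definition ker_op :: "('a::complex_inner \<Rightarrow> 'a) \<Rightarrow> 'a set" where
  "ker_op T = {x. T x = 0}"

definition orth_projection :: "('a::complex_inner \<Rightarrow> 'a) \<Rightarrow> bool" where
  "orth_projection P \<longleftrightarrow> bounded_op P \<and> P \<circ> P = P \<and> is_adjoint P P"

text \<open>The map \<phi>_A(X) = \<Sum>_{i\<in>I} A_i X A_i^*, the sum taken pointwise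
  (strong operator topology, unconditional convergence). The index set I is any
  subset of the naturals (finite: n \<in> \<nat>; infinite: n = \<infinity>).\<close>
definition phiA :: "(nat \<Rightarrow> 'a::complex_inner \<Rightarrow> 'a) \<Rightarrow> (nat \<Rightarrow> 'a \<Rightarrow> 'a) \<Rightarrow> nat set
    \<Rightarrow> ('a \<Rightarrow> 'a) \<Rightarrow> ('a \<Rightarrow> 'a)" where
  "phiA A As I X = (\<lambda>x. infsum (\<lambda>i. A i (X (As i x))) I)"

end

theory Submission
  imports Defs
begin



lemma cinner_add_left: "cinner (x + y) z = cinner x z + cinner y z"
  by (metis cinner_commute cinner_add_right complex_cnj_add)

lemma cinner_zero_right[simp]: "cinner x 0 = 0"
  using cinner_add_right[of x 0 0] by simp

lemma cinner_zero_left[simp]: "cinner 0 x = 0"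
  using cinner_add_left[of 0 0 x] by simp

lemma cinner_minus_right: "cinner x (- y) = - cinner x y"
proof -
  have "cinner x y + cinner x (-y) = 0" using cinner_add_right[of x y "-y"] by simp
  thus ?thesis by (rule minus_unique[symmetric])
qed

lemma cinner_minus_left: "cinner (- x) y = - cinner x y"
proof -
  have "cinner x y + cinner (-x) y = 0" using cinner_add_left[of x "-x" y] by simp
  thus ?thesis by (rule minus_unique[symmetric])
qed

lemma cinner_diff_right: "cinner x (y - z) = cinner x y - cinner x z"
  using cinner_add_right[of x y "-z"] by (simp add: cinner_minus_right)

lemma cinner_diff_left: "cinner (x - y) z = cinner x z - cinner y z"
  using cinner_add_left[of x "-y" z] by (simp add: cinner_minus_left)

lemma cinner_cscale_left: "cinner (cscale a x) y = cnj a * cinner x y"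
  by (metis cinner_commute cinner_cscale_right complex_cnj_mult)

lemma cinner_scaleR_right: "cinner x (scaleR r y) = complex_of_real r * cinner x y"
  by (metis cscale_of_real cinner_cscale_right)

lemma cinner_scaleR_left: "cinner (scaleR r x) y = complex_of_real r * cinner x y"
  by (metis cscale_of_real cinner_cscale_left complex_cnj_complex_of_real)

lemma cinner_self_Im: "Im (cinner x x) = 0"
proof -
  have "Im (cinner x x) = Im (cnj (cinner x x))" using cinner_commute[of x x] by simp
  then show ?thesis by simp
qed

lemma cinner_self_real: "cinner x x = complex_of_real (Re (cinner x x))"
  using cinner_self_Im by (simp add: complex_eq_iff)

lemma norm_sq_cinner: "(norm x)^2 = Re (cinner x x)"
  by (simp add: norm_eq_sqrt_cinner cinner_nonneg)

lemma cscale_add_scalar_zero[simp]: "cscale 0 x = 0"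
  using cscale_of_real[of 0 x] by simp

lemma cscale_zero_vec[simp]: "cscale a 0 = 0"
  using cscale_add_right[of a 0 0] by simp

lemma cscale_minus_vec: "cscale a (- x) = - cscale a x"
proof -
  have "cscale a x + cscale a (-x) = 0" using cscale_add_right[of a x "-x"] by simp
  thus ?thesis by (rule minus_unique[symmetric])
qed

lemma cscale_diff_vec: "cscale a (x - y) = cscale a x - cscale a y"
  using cscale_add_right[of a x "-y"] by (simp add: cscale_minus_vec)

lemma cscale_scaleR_comm: "cscale a (scaleR r x) = scaleR r (cscale a x)"
  by (metis cscale_of_real cscale_cscale mult.commute)

lemma norm_cscale: "norm (cscale a x) = cmod a * norm x"
proof -
  have "Re (cinner (cscale a x) (cscale a x)) = (cmod a)^2 * Re (cinner x x)"
  proof -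
    have "cinner (cscale a x) (cscale a x) = (a * cnj a) * cinner x x"
      by (simp add: cinner_cscale_left cinner_cscale_right)
    also have "\<dots> = complex_of_real ((cmod a)^2) * complex_of_real (Re (cinner x x))"
      by (metis cinner_self_real complex_norm_square)
    finally show ?thesis by (metis Re_complex_of_real of_real_mult)
  qed
  then have "(norm (cscale a x))^2 = (cmod a * norm x)^2"
    by (simp add: norm_sq_cinner power_mult_distrib)
  then show ?thesis by (simp add: power2_eq_iff_nonneg)
qed

lemma bounded_linear_cscale: "bounded_linear (cscale a)"
  by (rule bounded_linear_intro[where K="cmod a"])
    (auto simp: cscale_add_right cscale_scaleR_comm norm_cscale)



definition psa :: "('a::complex_inner \<Rightarrow> 'a) \<Rightarrow> bool" where
  "psa E \<longleftrightarrow> bounded_op E \<and> is_adjoint E E \<and> (\<forall>x. 0 \<le> Re (cinner x (E x)))"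

lemma bop_add: "bounded_op E \<Longrightarrow> E (x + y) = E x + E y"
  unfolding bounded_op_def using linear_add bounded_linear.linear by blast
lemma bop_diff: "bounded_op E \<Longrightarrow> E (x - y) = E x - E y"
  unfolding bounded_op_def using linear_diff bounded_linear.linear by blast
lemma bop_zero: "bounded_op E \<Longrightarrow> E 0 = 0"
  unfolding bounded_op_def using linear_0 bounded_linear.linear by blast
lemma bop_cscale: "bounded_op E \<Longrightarrow> E (cscale c x) = cscale c (E x)"
  unfolding bounded_op_def by blast
lemma bop_bl: "bounded_op E \<Longrightarrow> bounded_linear E"
  unfolding bounded_op_def by blast

lemma bop_id: "bounded_op id"
  unfolding bounded_op_def id_def by (simp add: bounded_linear_ident)

lemma bop_comp: "bounded_op E \<Longrightarrow> bounded_op F \<Longrightarrow> bounded_op (E \<circ> F)"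
  unfolding bounded_op_def o_def by (auto intro: bounded_linear_compose)

lemma bop_minus: "bounded_op E \<Longrightarrow> bounded_op F \<Longrightarrow> bounded_op (E - F)"
  unfolding bounded_op_def fun_diff_def by (auto simp: cscale_diff_vec intro: bounded_linear_sub)

lemma adj_sym: "is_adjoint E E \<Longrightarrow> cinner x (E y) = cinner (E x) y"
  unfolding is_adjoint_def by simp

lemma psa_id: "psa id"
  unfolding psa_def is_adjoint_def using bop_id cinner_nonneg by auto

lemma gcs:
  assumes "psa E"
  shows "(cmod (cinner x (E y)))^2 \<le> Re (cinner x (E x)) * Re (cinner y (E y))"
proof -
  have bo: "bounded_op E" and adj: "is_adjoint E E" and pos: "\<And>z. 0 \<le> Re (cinner z (E z))"
    using assms unfolding psa_def by auto
  have herm: "cinner u (E v) = cnj (cinner v (E u))" for u v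
    using adj_sym[OF adj, of u v] cinner_commute[of "E u" v] by simp
  have realx: "Im (cinner u (E u)) = 0" for u
  proof -
    have "Im (cinner u (E u)) = Im (cnj (cinner u (E u)))" using herm[of u u] by simp
    then show ?thesis by simp
  qed
  define a where "a = cinner x (E y)"
  define P where "P = Re (cinner x (E x))"
  define Q where "Q = Re (cinner y (E y))"
  define m where "m = (cmod a)^2"
  have P0: "P \<ge> 0" and Q0: "Q \<ge> 0" and m0: "m \<ge> 0" using pos by (auto simp: P_def Q_def m_def)
  have key: "0 \<le> P - 2*t*m + t^2*m*Q" for t :: real
  proof -
    define s where "s = - (complex_of_real t * cnj a)"
    define w where "w = x + cscale s y"
    have Ew: "E w = E x + cscale s (E y)" using bo by (simp add: w_def bop_add bop_cscale)
    have "cinner w (E w) = cinner x (E x) + s * cinner x (E y) + cnj s * cinner y (E x)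
        + cnj s * s * cinner y (E y)"
      unfolding Ew unfolding w_def by (simp add: cinner_add_left cinner_add_right cinner_cscale_left cinner_cscale_right
          algebra_simps)
    also have "\<dots> = cinner x (E x) + s * a + cnj s * cnj a + cnj s * s * cinner y (E y)"
      using herm[of y x] by (simp add: a_def)
    also have "\<dots> = cinner x (E x) - of_real (2*t*m) + of_real (t^2*m) * cinner y (E y)"
    proof -
      have aa: "a * cnj a = complex_of_real (cmod a) * complex_of_real (cmod a)"
        using complex_norm_square[of a] by (simp add: power2_eq_square)
      show ?thesis using aa unfolding s_def m_def by (simp add: power2_eq_square) algebra
    qed
    finally have "Re (cinner w (E w)) = P - 2*t*m + t^2*m*Q"
      using realx[of y] by (simp add: P_def Q_def)
    then show ?thesis using pos[of w] by simp
  qed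
  have "m \<le> P * Q"
  proof (cases "Q > 0")
    case True
    have "0 \<le> P - 2*(1/Q)*m + (1/Q)^2*m*Q" by (rule key)
    also have "\<dots> = P - m / Q" using True by (simp add: field_simps power2_eq_square)
    finally show ?thesis using True by (simp add: field_simps)
  next
    case False
    then have Q: "Q = 0" using Q0 by simp
    show ?thesis
    proof (rule ccontr)
      assume "\<not> m \<le> P * Q"
      then have mp: "m > 0" using Q by simp
      have "0 \<le> P - 2*((P+1)/(2*m))*m + ((P+1)/(2*m))^2*m*Q" by (rule key)
      also have "\<dots> = -1" using mp Q by (simp add: field_simps)
      finally show False by simp
    qed
  qed
  then show ?thesis by (simp add: m_def a_def P_def Q_def)
qed

lemma cs: "cmod (cinner x y) \<le> norm x * norm y"
proof -
  have "(cmod (cinner x y))^2 \<le> (norm x * norm y)^2"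
    using gcs[OF psa_id, of x y] by (simp add: norm_sq_cinner power_mult_distrib)
  then show ?thesis by (simp add: power2_le_iff_abs_le)
qed

lemma Re_cinner_le: "Re (cinner x y) \<le> norm x * norm y"
  using cs[of x y] complex_Re_le_cmod order_trans by blast

lemma psa_zero:
  assumes "psa E" "Re (cinner y (E y)) = 0" shows "E y = 0"
proof -
  have "(cmod (cinner (E y) (E y)))^2 \<le> 0" using gcs[OF assms(1), of "E y" y] assms(2) by simp
  then have "cinner (E y) (E y) = 0" by simp
  then show ?thesis using cinner_eq_zero_iff by blast
qed

lemma psa_sq:
  assumes "psa E" and bnd: "\<And>z. norm (E z) \<le> C * norm z"
  shows "(norm (E x))^2 \<le> C * Re (cinner x (E x))"
proof -
  define n where "n = norm (E x)"
  define R where "R = Re (cinner x (E x))"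
  have R0: "R \<ge> 0" using assms(1) unfolding psa_def R_def by auto
  have C0: "C \<ge> 0" if "n > 0"
    using bnd[of x] that n_def by (smt (verit, ccfv_SIG) mult_nonpos_nonneg norm_ge_zero)
  have "cmod (cinner (E x) (E x)) = n^2"
  proof -
    have "cinner (E x) (E x) = complex_of_real ((norm (E x))^2)"
      using cinner_self_real[of "E x"] norm_sq_cinner[of "E x"] by simp
    then show ?thesis by (simp add: n_def del: of_real_power)
  qed
  then have "n^4 \<le> Re (cinner (E x) (E (E x))) * R"
    using gcs[OF assms(1), of "E x" x] by (simp add: R_def power_mult_distrib flip: power_mult)
  also have "\<dots> \<le> (n * (C * n)) * R"
  proof (rule mult_right_mono[OF _ R0])
    have "Re (cinner (E x) (E (E x))) \<le> n * norm (E (E x))" using Re_cinner_le n_def by blast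
    also have "\<dots> \<le> n * (C * n)" using bnd[of "E x"] n_def by (simp add: mult_left_mono)
    finally show "Re (cinner (E x) (E (E x))) \<le> n * (C * n)" .
  qed
  finally have le: "n^4 \<le> n^2 * (C * R)" by (simp add: power2_eq_square algebra_simps)
  show ?thesis
  proof (cases "n > 0")
    case True
    then have "n^2 > 0" by simp
    with le have "n^2 \<le> C * R" by (smt (verit) mult_le_cancel_left power2_eq_square power4_eq_xxxx
          mult.assoc)
    then show ?thesis by (simp add: n_def R_def)
  next
    case False
    then have "n = 0" using n_def by simp
    then show ?thesis by (simp add: n_def)
  qed
qed



lemma cinner_ext: "(\<And>z. cinner z u = cinner z v) \<Longrightarrow> u = v"
proof -
  assume h: "\<And>z. cinner z u = cinner z v"
  have "cinner (u - v) (u - v) = cinner (u - v) u - cinner (u - v) v" by (rule cinner_diff_right)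
  also have "\<dots> = 0" using h[of "u - v"] by simp
  finally have "cinner (u - v) (u - v) = 0" .
  then have "u - v = 0" using cinner_eq_zero_iff by blast
  then show "u = v" by simp
qed

lemma adj_bop:
  assumes bA: "bounded_op A" and adj: "is_adjoint A B"
  shows "bounded_op B"
proof -
  have ad: "cinner z (B y) = cinner (A z) y" for z y using adj unfolding is_adjoint_def by simp
  have add: "B (x + y) = B x + B y" for x y
    by (rule cinner_ext) (simp add: ad cinner_add_right)
  have csc: "B (cscale c x) = cscale c (B x)" for c x
    by (rule cinner_ext) (simp add: ad cinner_cscale_right)
  obtain K where K: "K > 0" "\<And>x. norm (A x) \<le> norm x * K"
    using bounded_linear.pos_bounded[OF bop_bl[OF bA]] by blast
  have nb: "norm (B y) \<le> norm y * K" for y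
  proof -
    have "(norm (B y))^2 = Re (cinner (A (B y)) y)" by (simp add: norm_sq_cinner ad[symmetric])
    also have "\<dots> \<le> norm (A (B y)) * norm y" by (rule Re_cinner_le)
    also have "\<dots> \<le> norm (B y) * K * norm y" using K(2) by (simp add: mult_right_mono)
    finally have h: "norm (B y) * norm (B y) \<le> norm (B y) * (norm y * K)"
      by (simp add: algebra_simps power2_eq_square)
    show ?thesis
    proof (cases "norm (B y) > 0")
      case True then show ?thesis using h mult_le_cancel_left_pos by blast
    next
      case False then have "norm (B y) = 0" by simp
      then show ?thesis using K(1) by simp
    qed
  qed
  have sc: "B (scaleR r x) = scaleR r (B x)" for r x
    using csc[of "complex_of_real r" x] by (simp only: cscale_of_real)
  have "bounded_linear B"
    by (rule bounded_linear_intro[where K=K]) (rule add, rule sc, rule nb)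
  then show ?thesis unfolding bounded_op_def using csc by blast
qed

lemma summable_partial_bounded:
  fixes f :: "'i::type \<Rightarrow> 'b::real_normed_vector"
  assumes "f summable_on I"
  shows "\<exists>B. \<forall>F. finite F \<and> F \<subseteq> I \<longrightarrow> norm (sum f F) \<le> B"
proof -
  obtain s where "(f has_sum s) I" using assms unfolding summable_on_def by (elim exE)
  then have "(sum f \<longlongrightarrow> s) (finite_subsets_at_top I)" by (simp add: has_sum_def)
  then have "eventually (\<lambda>F. dist (sum f F) s < 1) (finite_subsets_at_top I)"
    by (rule tendstoD) simp
  then have "\<exists>X. finite X \<and> X \<subseteq> I \<and> (\<forall>Y. finite Y \<and> X \<subseteq> Y \<and> Y \<subseteq> I \<longrightarrow> dist (sum f Y) s < 1)"
    by (simp only: eventually_finite_subsets_at_top)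
  then obtain X where XX: "finite X \<and> X \<subseteq> I \<and> (\<forall>Y. finite Y \<and> X \<subseteq> Y \<and> Y \<subseteq> I \<longrightarrow> dist (sum f Y) s < 1)" ..
  have X: "finite X" "X \<subseteq> I" using XX by simp_all
  have P: "\<And>Y. finite Y \<Longrightarrow> X \<subseteq> Y \<Longrightarrow> Y \<subseteq> I \<Longrightarrow> dist (sum f Y) s < 1"
    using XX by simp
  have "norm (sum f F) \<le> norm s + 1 + (\<Sum>x\<in>X. norm (f x))" if F: "finite F" "F \<subseteq> I" for F
  proof -
    have u: "sum f (F \<union> X) = sum f F + sum f (X - F)"
    proof -
      have e: "F \<union> X = F \<union> (X - F)" by blast
      show ?thesis unfolding e by (rule sum.union_disjoint) (use F X in auto)
    qed
    have d: "dist (sum f (F \<union> X)) s < 1" using P[of "F \<union> X"] F X by auto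
    have n1: "norm (sum f (F \<union> X)) \<le> norm s + 1"
      using d norm_triangle_sub[of "sum f (F \<union> X)" s] by (simp add: dist_norm)
    have n2: "norm (sum f (X - F)) \<le> (\<Sum>x\<in>X. norm (f x))"
    proof -
      have "norm (sum f (X - F)) \<le> (\<Sum>x\<in>X - F. norm (f x))" by (rule norm_sum)
      also have "\<dots> \<le> (\<Sum>x\<in>X. norm (f x))" by (rule sum_mono2) (use X in auto)
      finally show ?thesis .
    qed
    have "sum f F = sum f (F \<union> X) - sum f (X - F)" using u by simp
    then have "norm (sum f F) \<le> norm (sum f (F \<union> X)) + norm (sum f (X - F))"
      by (simp only: norm_triangle_ineq4)
    then show ?thesis using n1 n2 by simp
  qed
  then show ?thesis by blast
qed

lemma ubp:
  fixes S :: "'i::type \<Rightarrow> 'a::{real_normed_vector,complete_space} \<Rightarrow> 'b::real_normed_vector"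
  assumes bl: "\<And>j. bounded_linear (S j)" and pb: "\<And>x. \<exists>B. \<forall>j. norm (S j x) \<le> B"
  shows "\<exists>C. \<forall>j x. norm (S j x) \<le> C * norm x"
proof -
  define En where "En n = {x. \<forall>j. norm (S j x) \<le> real n}" for n :: nat
  have cl: "closed (En n)" for n
    unfolding En_def
    by (intro closed_Collect_all closed_Collect_le continuous_on_norm continuous_on_const
        linear_continuous_on bl)
  have un: "\<Union>(range En) = UNIV"
  proof -
    have "x \<in> \<Union>(range En)" for x
    proof -
      obtain B where B: "\<forall>j. norm (S j x) \<le> B" using pb by blast
      have "B \<le> real (nat \<lceil>B\<rceil>)" by linarith
      then have "\<forall>j. norm (S j x) \<le> real (nat \<lceil>B\<rceil>)" using B by (meson order.trans)
      then have "x \<in> En (nat \<lceil>B\<rceil>)" unfolding En_def by blast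
      then show ?thesis by blast
    qed
    then show ?thesis by blast
  qed
  have "\<exists>n. interior (En n) \<noteq> {}"
  proof (rule ccontr)
    assume nt: "\<not> ?thesis"
    have "euclidean interior_of \<Union>(range En) = {}"
    proof (intro Baire_category_alt)
      show "completely_metrizable_space (euclidean :: 'a topology) \<or>
        locally_compact_space (euclidean :: 'a topology) \<and> regular_space (euclidean :: 'a topology)"
        using completely_metrizable_space_euclidean by blast
      show "countable (range En)" by simp
      fix T assume "T \<in> range En"
      then obtain n where "T = En n" "interior (En n) = {}" using nt by blast
      then show "closedin euclidean T \<and> euclidean interior_of T = {}" using cl by simp
    qed
    then show False using un by simp
  qed
  then obtain n x0 where "x0 \<in> interior (En n)" by blast
  then obtain e where e: "e > 0" "ball x0 e \<subseteq> En n" using mem_interior by blast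
  have "norm (S j y) \<le> (4 * real n / e) * norm y" for j y
  proof (cases "y = 0")
    case True then show ?thesis using linear_0[OF bounded_linear.linear[OF bl]] by simp
  next
    case False
    then have ny: "norm y > 0" by simp
    define z where "z = (e / 2 / norm y) *\<^sub>R y"
    have nz: "norm z = e / 2" using ny e by (simp add: z_def)
    have "x0 + z \<in> ball x0 e" using nz e by (simp add: dist_norm)
    then have h1: "norm (S j (x0 + z)) \<le> real n" using e(2) unfolding En_def by blast
    have "x0 \<in> ball x0 e" using e by simp
    then have h2: "norm (S j x0) \<le> real n" using e(2) unfolding En_def by blast
    have "S j z = S j (x0 + z) - S j x0" using bounded_linear.linear[OF bl] by (simp add: linear_add)
    then have hz: "norm (S j z) \<le> 2 * real n" using h1 h2
      using norm_triangle_ineq4[of "S j (x0 + z)" "S j x0"] by simp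
    have "S j z = (e/2/norm y) *\<^sub>R S j y" unfolding z_def
      by (rule linear_scale[OF bounded_linear.linear[OF bl]])
    then have "norm (S j z) = (e/2/norm y) * norm (S j y)" using e ny by simp
    then have "norm (S j y) = (2 * norm y / e) * norm (S j z)" using e ny by (simp add: field_simps)
    also have "\<dots> \<le> (2 * norm y / e) * (2 * real n)" by (rule mult_left_mono) (use hz ny e in auto)
    also have "\<dots> = (4 * real n / e) * norm y" by (simp add: field_simps)
    finally show ?thesis .
  qed
  then show ?thesis by blast
qed



lemma bl_cinner_right: "bounded_linear (cinner y)"
proof (rule bounded_linear_intro[where K="norm y"])
  show "norm (cinner y x) \<le> norm x * norm y" for x using cs[of y x] by (simp add: mult.commute)
qed (auto simp: cinner_add_right cinner_scaleR_right scaleR_conv_of_real)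

lemma bl_cinner_left: "bounded_linear (\<lambda>z. cinner z y)"
  by (rule bounded_linear_intro[where K="norm y"])
    (auto simp: cinner_add_left cinner_scaleR_left scaleR_conv_of_real cs)

lemma psa_diff:
  assumes "psa E" "psa F" "\<And>z. Re (cinner z (F z)) \<le> Re (cinner z (E z))"
  shows "psa (E - F)"
  using assms unfolding psa_def is_adjoint_def
  by (auto simp: bop_minus cinner_diff_left cinner_diff_right)

lemma mcl:
  fixes Y :: "nat \<Rightarrow> 'a::chilbert_space \<Rightarrow> 'a"
  assumes ps: "\<And>k. psa (Y k)" and nb: "\<And>k z. norm (Y k z) \<le> norm z"
    and dec: "\<And>k z. Re (cinner z (Y (Suc k) z)) \<le> Re (cinner z (Y k z))"
  shows "\<exists>L. psa L \<and> (\<forall>z. norm (L z) \<le> norm z) \<and> (\<forall>x. (\<lambda>k. Y k x) \<longlonglongrightarrow> L x)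
     \<and> (\<forall>k z. Re (cinner z (L z)) \<le> Re (cinner z (Y k z)))"
proof -
  define q where "q x k = Re (cinner x (Y k x))" for x k
  have qdec: "decseq (q x)" for x unfolding q_def by (rule decseq_SucI) (rule dec)
  have qpos: "0 \<le> q x k" for x k using ps[of k] unfolding psa_def q_def by auto
  have qle: "k \<le> m \<Longrightarrow> q x m \<le> q x k" for x k m using qdec decseqD by blast
  have qconv: "convergent (q x)" for x
  proof -
    have "\<forall>i. 0 \<le> q x i" using qpos by simp
    then obtain l where "q x \<longlonglongrightarrow> l" using decseq_convergent[OF qdec[of x]] by metis
    then show ?thesis by (rule convergentI)
  qed
  have key: "(norm (Y k x - Y m x))^2 \<le> 2 * (q x k - q x m)" if "k \<le> m" for k m x
  proof -
    have p: "psa (Y k - Y m)"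
      by (rule psa_diff[OF ps ps]) (use qle[OF that] in \<open>simp add: q_def\<close>)
    have b: "norm ((Y k - Y m) z) \<le> 2 * norm z" for z
      using norm_triangle_ineq4[of "Y k z" "Y m z"] nb[of k z] nb[of m z] by simp
    have "(norm ((Y k - Y m) x))^2 \<le> 2 * Re (cinner x ((Y k - Y m) x))" by (rule psa_sq[OF p b])
    then show ?thesis by (simp add: q_def cinner_diff_right)
  qed
  have cau: "Cauchy (\<lambda>k. Y k x)" for x
  proof (rule CauchyI)
    fix e :: real assume e: "0 < e"
    have cq: "Cauchy (q x)" using qconv[of x] by (simp add: Cauchy_convergent_iff)
    have "0 < e^2/2" using e by simp
    from CauchyD[OF cq this] obtain M where M: "\<forall>m\<ge>M. \<forall>n\<ge>M. norm (q x m - q x n) < e^2/2" ..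
    have "norm (Y m x - Y n x) < e" if mn: "m \<ge> M" "n \<ge> M" for m n
    proof -
      have qmn: "\<bar>q x m - q x n\<bar> < e^2/2" using M mn by simp
      have "(norm (Y m x - Y n x))^2 < e^2"
      proof (cases "m \<le> n")
        case True
        have "(norm (Y m x - Y n x))^2 \<le> 2 * (q x m - q x n)" by (rule key[OF True])
        also have "\<dots> < 2 * (e^2/2)" using conjunct1[OF abs_less_iff[THEN iffD1, OF qmn]] conjunct2[OF abs_less_iff[THEN iffD1, OF qmn]] by (simp add: field_simps)
        also have "\<dots> = e^2" by simp
        finally show ?thesis .
      next
        case False
        then have nm: "n \<le> m" by simp
        have "(norm (Y m x - Y n x))^2 = (norm (Y n x - Y m x))^2" by (simp add: norm_minus_commute)
        also have "\<dots> \<le> 2 * (q x n - q x m)" by (rule key[OF nm])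
        also have "\<dots> < 2 * (e^2/2)" using conjunct1[OF abs_less_iff[THEN iffD1, OF qmn]] conjunct2[OF abs_less_iff[THEN iffD1, OF qmn]] by (simp add: field_simps)
        also have "\<dots> = e^2" by simp
        finally show ?thesis .
      qed
      then show ?thesis using e by (simp add: power_less_imp_less_base)
    qed
    then show "\<exists>M. \<forall>m\<ge>M. \<forall>n\<ge>M. norm (Y m x - Y n x) < e" by blast
  qed
  define L where "L x = lim (\<lambda>k. Y k x)" for x
  have lim: "(\<lambda>k. Y k x) \<longlonglongrightarrow> L x" for x
    unfolding L_def using Cauchy_convergent[OF cau] by (simp only: convergent_LIMSEQ_iff)
  have bo: "bounded_op (Y k)" for k using ps unfolding psa_def by blast
  have Ladd: "L (x + y) = L x + L y" for x y
  proof -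
    have "(\<lambda>k. Y k (x + y)) \<longlonglongrightarrow> L x + L y"
      using tendsto_add[OF lim[of x] lim[of y]] by (simp add: bop_add[OF bo])
    then show ?thesis using lim LIMSEQ_unique by blast
  qed
  have Lcs: "L (cscale c x) = cscale c (L x)" for c x
  proof -
    have "(\<lambda>k. Y k (cscale c x)) \<longlonglongrightarrow> cscale c (L x)"
      using bounded_linear.tendsto[OF bounded_linear_cscale lim[of x]] by (simp add: bop_cscale[OF bo])
    then show ?thesis using lim LIMSEQ_unique by blast
  qed
  have Lnb: "norm (L z) \<le> norm z" for z
    by (rule LIMSEQ_le_const2[OF tendsto_norm[OF lim[of z]]]) (use nb in auto)
  have "bounded_linear L"
    by (rule bounded_linear_intro[where K=1]) (auto simp: Ladd Lcs Lnb cscale_of_real[symmetric])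
  then have Lbo: "bounded_op L" unfolding bounded_op_def using Lcs by blast
  have Ladj: "is_adjoint L L"
    unfolding is_adjoint_def
  proof (intro allI)
    fix x y
    have "(\<lambda>k. cinner (Y k x) y) \<longlonglongrightarrow> cinner (L x) y"
      by (rule bounded_linear.tendsto[OF bl_cinner_left lim])
    moreover have "(\<lambda>k. cinner (Y k x) y) \<longlonglongrightarrow> cinner x (L y)"
      using bounded_linear.tendsto[OF bl_cinner_right lim[of y], of x] ps
      by (simp add: psa_def adj_sym)
    ultimately show "cinner (L x) y = cinner x (L y)" using LIMSEQ_unique by blast
  qed
  have qlim: "(\<lambda>k. q z k) \<longlonglongrightarrow> Re (cinner z (L z))" for z
    unfolding q_def by (intro tendsto_Re bounded_linear.tendsto[OF bl_cinner_right lim])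
  have Lpos: "0 \<le> Re (cinner z (L z))" for z
    by (rule LIMSEQ_le_const[OF qlim]) (use qpos in auto)
  have Lle: "Re (cinner z (L z)) \<le> Re (cinner z (Y k z))" for k z
    by (rule LIMSEQ_le_const2[OF qlim]) (use qle in \<open>auto simp: q_def\<close>)
  have "psa L" unfolding psa_def using Lbo Ladj Lpos by blast
  then show ?thesis using Lnb lim Lle by blast
qed



lemma funpow_bop: fixes E :: "'a::complex_inner \<Rightarrow> 'a" shows "bounded_op E \<Longrightarrow> bounded_op (E ^^ n)"
  by (induction n) (simp_all add: bop_id bop_comp)

lemma funpow_nb: fixes E :: "'a::complex_inner \<Rightarrow> 'a" shows "(\<And>z. norm (E z) \<le> norm z) \<Longrightarrow> norm ((E ^^ n) z) \<le> norm z"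
proof (induction n arbitrary: z)
  case 0 then show ?case by simp
next
  case (Suc n)
  have "norm ((E ^^ Suc n) z) = norm (E ((E ^^ n) z))" by simp
  also have "\<dots> \<le> norm ((E ^^ n) z)" by (rule Suc.prems)
  also have "\<dots> \<le> norm z" by (rule Suc.IH[OF Suc.prems])
  finally show ?case .
qed

lemma ipow: fixes E :: "'a::complex_inner \<Rightarrow> 'a" shows "is_adjoint E E \<Longrightarrow> cinner x ((E ^^ (p + r)) y) = cinner ((E ^^ p) x) ((E ^^ r) y)"
proof (induction p arbitrary: x)
  case 0 then show ?case by simp
next
  case (Suc p)
  have "cinner x ((E ^^ (Suc p + r)) y) = cinner x (E ((E ^^ (p + r)) y))" by simp
  also have "\<dots> = cinner (E x) ((E ^^ (p + r)) y)" by (rule adj_sym[OF Suc.prems])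
  also have "\<dots> = cinner ((E ^^ p) (E x)) ((E ^^ r) y)" by (rule Suc.IH[OF Suc.prems])
  also have "(E ^^ p) (E x) = (E ^^ Suc p) x" by (simp only: funpow_Suc_right o_apply)
  finally show ?case .
qed

lemma psa_le_id:
  fixes E :: "'a::complex_inner \<Rightarrow> 'a"
  assumes "\<And>z. norm (E z) \<le> norm z" shows "Re (cinner y (E y)) \<le> Re (cinner y y)"
proof -
  have "Re (cinner y (E y)) \<le> norm y * norm (E y)" by (rule Re_cinner_le)
  also have "\<dots> \<le> norm y * norm y" by (rule mult_left_mono[OF assms norm_ge_zero])
  also have "\<dots> = Re (cinner y y)" by (simp add: norm_sq_cinner[symmetric] power2_eq_square)
  finally show ?thesis .
qed

lemma psa_sq1:
  fixes E :: "'a::complex_inner \<Rightarrow> 'a"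
  assumes "psa E" "\<And>z. norm (E z) \<le> norm z" shows "Re (cinner (E y) (E y)) \<le> Re (cinner y (E y))"
proof -
  have "(norm (E y))^2 \<le> 1 * Re (cinner y (E y))" by (rule psa_sq[OF assms(1)]) (simp add: assms(2))
  then show ?thesis by (simp add: norm_sq_cinner)
qed

lemma cp_compl:
  fixes E :: "'a::complex_inner \<Rightarrow> 'a"
  assumes ps: "psa E" and nb: "\<And>z. norm (E z) \<le> norm z"
  shows "psa (id - E) \<and> (\<forall>z. norm ((id - E) z) \<le> norm z)"
proof -
  have bo: "bounded_op E" and ad: "is_adjoint E E" using ps unfolding psa_def by auto
  have b1: "bounded_op (id - E)" by (rule bop_minus[OF bop_id bo])
  have a1: "is_adjoint (id - E) (id - E)"
    unfolding is_adjoint_def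
    by (simp add: cinner_diff_left cinner_diff_right adj_sym[OF ad])
  have p1: "0 \<le> Re (cinner z ((id - E) z))" for z
    using psa_le_id[OF nb, of z] by (simp add: cinner_diff_right)
  have n1: "norm ((id - E) z) \<le> norm z" for z
  proof -
    have "(norm (z - E z))^2 = Re (cinner z z) - Re (cinner z (E z)) - Re (cinner (E z) z)
        + Re (cinner (E z) (E z))"
      by (simp add: norm_sq_cinner cinner_diff_left cinner_diff_right)
    also have "\<dots> = Re (cinner z z) - 2 * Re (cinner z (E z)) + Re (cinner (E z) (E z))"
      by (simp add: adj_sym[OF ad, symmetric])
    also have "\<dots> \<le> Re (cinner z z)"
    proof -
      have "0 \<le> Re (cinner z (E z))" using ps unfolding psa_def by blast
      then show ?thesis using psa_sq1[OF ps nb, of z] by linarith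
    qed
    also have "\<dots> = (norm z)^2" by (simp add: norm_sq_cinner)
    finally have "(norm (z - E z))^2 \<le> (norm z)^2" .
    then have "norm (z - E z) \<le> norm z" by (rule power2_le_imp_le[OF _ norm_ge_zero])
    then show ?thesis by simp
  qed
  show ?thesis unfolding psa_def using b1 a1 p1 n1 by blast
qed

lemma pow_lim:
  fixes E :: "'a::chilbert_space \<Rightarrow> 'a"
  assumes ps: "psa E" and nb: "\<And>z. norm (E z) \<le> norm z"
  shows "\<exists>P. psa P \<and> (\<forall>x. E (P x) = P x) \<and> (\<forall>y. E y = y \<longrightarrow> P y = y)
    \<and> (\<forall>y. E y = 0 \<longrightarrow> P y = 0)"
proof -
  have bo: "bounded_op E" and ad: "is_adjoint E E" and pos: "\<And>z. 0 \<le> Re (cinner z (E z))"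
    using ps unfolding psa_def by auto
  have ev: "cinner x ((E ^^ (j + j)) x) = cinner ((E ^^ j) x) ((E ^^ j) x)" for j x
    by (rule ipow[OF ad])
  have od: "cinner x ((E ^^ (j + Suc j)) x) = cinner ((E ^^ j) x) (E ((E ^^ j) x))" for j x
    using ipow[OF ad, where p=j and r="Suc j" and x=x and y=x] by simp
  have ev2: "cinner x ((E ^^ (Suc j + Suc j)) x) = cinner (E ((E ^^ j) x)) (E ((E ^^ j) x))" for j x
    using ipow[OF ad, where p="Suc j" and r="Suc j" and x=x and y=x] by simp
  have pn: "psa (E ^^ n)" for n
  proof -
    have b: "bounded_op (E ^^ n)" by (rule funpow_bop[OF bo])
    have a: "is_adjoint (E ^^ n) (E ^^ n)"
      unfolding is_adjoint_def using ipow[OF ad, where p=n and r=0] by simp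
    have p: "0 \<le> Re (cinner x ((E ^^ n) x))" for x
    proof (cases "even n")
      case True
      then obtain j where "n = 2 * j" by (rule evenE)
      then have "n = j + j" by simp
      then show ?thesis using ev[where j=j and x=x] cinner_nonneg by simp
    next
      case False
      then obtain j where "n = 2 * j + 1" by (rule oddE)
      then have "n = j + Suc j" by simp
      then show ?thesis using od[where j=j and x=x] pos by simp
    qed
    show ?thesis unfolding psa_def using b a p by blast
  qed
  have dec: "Re (cinner x ((E ^^ Suc n) x)) \<le> Re (cinner x ((E ^^ n) x))" for n x
  proof (cases "even n")
    case True
    then obtain j where "n = 2 * j" by (rule evenE)
    then have j: "n = j + j" by simp
    have e1: "cinner x ((E ^^ Suc n) x) = cinner ((E ^^ j) x) (E ((E ^^ j) x))"
      using od[where j=j and x=x] j by simp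
    have e2: "cinner x ((E ^^ n) x) = cinner ((E ^^ j) x) ((E ^^ j) x)"
      using ev[where j=j and x=x] j by simp
    show ?thesis unfolding e1 e2 by (rule psa_le_id[OF nb])
  next
    case False
    then obtain j where "n = 2 * j + 1" by (rule oddE)
    then have j: "n = j + Suc j" by simp
    have e1: "cinner x ((E ^^ Suc n) x) = cinner (E ((E ^^ j) x)) (E ((E ^^ j) x))"
      using ev2[where j=j and x=x] j by simp
    have e2: "cinner x ((E ^^ n) x) = cinner ((E ^^ j) x) (E ((E ^^ j) x))"
      using od[where j=j and x=x] j by simp
    show ?thesis unfolding e1 e2 by (rule psa_sq1[OF ps nb])
  qed
  obtain P where P: "psa P" "\<And>x. (\<lambda>n. (E ^^ n) x) \<longlonglongrightarrow> P x"
    using mcl[where Y="\<lambda>n. E ^^ n", OF pn funpow_nb[OF nb] dec] by blast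
  have fix1: "E (P x) = P x" for x
  proof -
    have "(\<lambda>n. E ((E ^^ n) x)) \<longlonglongrightarrow> E (P x)"
      by (rule bounded_linear.tendsto[OF bop_bl[OF bo] P(2)])
    moreover have "(\<lambda>n. E ((E ^^ n) x)) \<longlonglongrightarrow> P x"
      using LIMSEQ_Suc[OF P(2)[of x]] by simp
    ultimately show ?thesis using LIMSEQ_unique by blast
  qed
  have fix2: "P y = y" if "E y = y" for y
  proof -
    have "(E ^^ n) y = y" for n by (induction n) (simp_all add: that)
    then have "(\<lambda>n. (E ^^ n) y) \<longlonglongrightarrow> y" by simp
    then show ?thesis using P(2)[of y] LIMSEQ_unique by blast
  qed
  have fix3: "P y = 0" if "E y = 0" for y
  proof -
    have "(E ^^ Suc n) y = 0" for n
      using that bop_zero[OF funpow_bop[OF bo, of n]] by (simp only: funpow_Suc_right o_apply)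
    then have "(\<lambda>n. (E ^^ Suc n) y) \<longlonglongrightarrow> 0" by simp
    then show ?thesis using LIMSEQ_Suc[OF P(2)[of y]] LIMSEQ_unique by blast
  qed
  show ?thesis using P(1) fix1 fix2 fix3 by blast
qed



locale phisetup =
  fixes A As :: "nat \<Rightarrow> 'a::chilbert_space \<Rightarrow> 'a" and I :: "nat set"
  assumes bnd: "\<And>i. i \<in> I \<Longrightarrow> bounded_op (A i)"
    and adj: "\<And>i. i \<in> I \<Longrightarrow> is_adjoint (A i) (As i)"
    and welldef: "\<And>X x. bounded_op X \<Longrightarrow> (\<lambda>i. A i (X (As i x))) summable_on I"
    and contr: "\<And>X. bounded_op X \<Longrightarrow> onorm X \<le> 1 \<Longrightarrow> onorm (phiA A As I X) \<le> 1"
begin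

lemma bAs: "i \<in> I \<Longrightarrow> bounded_op (As i)"
  by (rule adj_bop[OF bnd adj])

lemma adjA2: "i \<in> I \<Longrightarrow> cinner (A i z) y = cinner z (As i y)"
  using adj unfolding is_adjoint_def by blast

lemma adjA1: "i \<in> I \<Longrightarrow> cinner y (A i z) = cinner (As i y) z"
proof -
  assume i: "i \<in> I"
  have "cinner y (A i z) = cnj (cinner (A i z) y)" by (rule cinner_commute)
  also have "\<dots> = cnj (cinner z (As i y))" by (simp only: adjA2[OF i])
  also have "\<dots> = cinner (As i y) z" by (rule cinner_commute[symmetric])
  finally show ?thesis .
qed

lemma phi_bop:
  assumes X: "bounded_op X" shows "bounded_op (phiA A As I X)"
proof -
  define f where "f x i = A i (X (As i x))" for x i
  have T: "phiA A As I X x = infsum (f x) I" for x by (simp add: phiA_def f_def[abs_def])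
  have sm: "f x summable_on I" for x unfolding f_def by (rule welldef[OF X])
  have add: "phiA A As I X (x + y) = phiA A As I X x + phiA A As I X y" for x y
  proof -
    have "infsum (f (x + y)) I = infsum (\<lambda>i. f x i + f y i) I"
    proof (rule infsum_cong)
      fix i assume i: "i \<in> I"
      show "f (x + y) i = f x i + f y i"
        unfolding f_def by (simp add: bop_add[OF bAs[OF i]] bop_add[OF X] bop_add[OF bnd[OF i]])
    qed
    also have "\<dots> = infsum (f x) I + infsum (f y) I" by (rule infsum_add[OF sm sm])
    finally show ?thesis by (simp only: T)
  qed
  have csc: "phiA A As I X (cscale c x) = cscale c (phiA A As I X x)" for c x
  proof -
    have "infsum (f (cscale c x)) I = infsum (\<lambda>i. cscale c (f x i)) I"
    proof (rule infsum_cong)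
      fix i assume i: "i \<in> I"
      show "f (cscale c x) i = cscale c (f x i)"
        unfolding f_def by (simp add: bop_cscale[OF bAs[OF i]] bop_cscale[OF X] bop_cscale[OF bnd[OF i]])
    qed
    also have "\<dots> = cscale c (infsum (f x) I)"
      by (rule infsumI[OF has_sum_bounded_linear[OF bounded_linear_cscale has_sum_infsum[OF sm]]])
    finally show ?thesis by (simp only: T)
  qed
  have sc: "phiA A As I X (scaleR r x) = scaleR r (phiA A As I X x)" for r x
    using csc[of "complex_of_real r" x] by (simp only: cscale_of_real)
  define S where "S F x = sum (f x) (F \<inter> I)" for F x
  have blS: "bounded_linear (S F)" for F
    unfolding S_def f_def
  proof (rule bounded_linear_sum)
    fix i assume "i \<in> F \<inter> I"
    then have i: "i \<in> I" by simp
    show "bounded_linear (\<lambda>x. A i (X (As i x)))"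
      using bounded_linear_compose[OF bop_bl[OF bnd[OF i]]
          bounded_linear_compose[OF bop_bl[OF X] bop_bl[OF bAs[OF i]]]] .
  qed
  have pb: "\<exists>B. \<forall>F. norm (S F x) \<le> B" for x
  proof -
    obtain B where B: "\<forall>F. finite F \<and> F \<subseteq> I \<longrightarrow> norm (sum (f x) F) \<le> B"
      using summable_partial_bounded[OF sm] ..
    have B0: "0 \<le> B" using B[rule_format, of "{}"] by simp
    have "norm (S F x) \<le> B" for F
    proof (cases "finite (F \<inter> I)")
      case True then show ?thesis unfolding S_def using B by simp
    next
      case False then show ?thesis unfolding S_def using B0 by simp
    qed
    then show ?thesis by blast
  qed
  obtain C where C0: "\<forall>F x. norm (S F x) \<le> C * norm x"
    using ubp[OF blS pb] ..
  have C: "norm (S F x) \<le> C * norm x" for F x using C0 by simp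
  have nb: "norm (phiA A As I X x) \<le> norm x * C" for x
  proof -
    have lim: "(sum (f x) \<longlongrightarrow> infsum (f x) I) (finite_subsets_at_top I)"
      using has_sum_infsum[OF sm] unfolding has_sum_def .
    have ev: "eventually (\<lambda>F. norm (sum (f x) F) \<le> C * norm x) (finite_subsets_at_top I)"
    proof (rule eventually_finite_subsets_at_top_weakI)
      fix F assume "finite F" "F \<subseteq> I"
      then have FI: "F \<inter> I = F" by blast
      have e: "S F x = sum (f x) F" unfolding S_def FI ..
      show "norm (sum (f x) F) \<le> C * norm x" using C[of F x] unfolding e .
    qed
    have "norm (infsum (f x) I) \<le> C * norm x"
      by (rule Lim_norm_ubound[OF finite_subsets_at_top_neq_bot lim ev])
    then show ?thesis unfolding T by (simp only: mult.commute)
  qed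
  have "bounded_linear (phiA A As I X)"
    by (rule bounded_linear_intro[where K=C]) (rule add, rule sc, rule nb)
  then show ?thesis unfolding bounded_op_def using csc by blast
qed

lemma phi_sm: "bounded_op X \<Longrightarrow> (\<lambda>i. A i (X (As i x))) summable_on I"
  by (rule welldef)

lemma phi_inner:
  assumes X: "bounded_op X"
  shows "cinner y (phiA A As I X x) = infsum (\<lambda>i. cinner (As i y) (X (As i x))) I"
proof -
  have "cinner y (phiA A As I X x) = cinner y (infsum (\<lambda>i. A i (X (As i x))) I)"
    by (simp add: phiA_def)
  also have "\<dots> = infsum (\<lambda>i. cinner y (A i (X (As i x)))) I"
    by (rule infsumI[OF has_sum_bounded_linear[OF bl_cinner_right has_sum_infsum[OF welldef[OF X]]], symmetric])
  also have "\<dots> = infsum (\<lambda>i. cinner (As i y) (X (As i x))) I"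
    by (rule infsum_cong) (rule adjA1)
  finally show ?thesis .
qed

lemma phi_inner_left:
  assumes X: "bounded_op X"
  shows "cinner (phiA A As I X x) y = infsum (\<lambda>i. cinner (X (As i x)) (As i y)) I"
proof -
  have "cinner (phiA A As I X x) y = cinner (infsum (\<lambda>i. A i (X (As i x))) I) y"
    by (simp add: phiA_def)
  also have "\<dots> = infsum (\<lambda>i. cinner (A i (X (As i x))) y) I"
    by (rule infsumI[OF has_sum_bounded_linear[OF bl_cinner_left has_sum_infsum[OF welldef[OF X]]], symmetric])
  also have "\<dots> = infsum (\<lambda>i. cinner (X (As i x)) (As i y)) I"
    by (rule infsum_cong) (rule adjA2)
  finally show ?thesis .
qed

lemma phi_inner_sm:
  assumes X: "bounded_op X"
  shows "(\<lambda>i. cinner (As i y) (X (As i x))) summable_on I"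
proof -
  have "(\<lambda>i. cinner y (A i (X (As i x)))) summable_on I"
    by (rule summable_on_bounded_linear[OF bl_cinner_right welldef[OF X]])
  moreover have "(\<lambda>i. cinner y (A i (X (As i x)))) summable_on I \<longleftrightarrow>
      (\<lambda>i. cinner (As i y) (X (As i x))) summable_on I"
    by (rule summable_on_cong) (rule adjA1)
  ultimately show ?thesis by simp
qed

lemma phi_Re:
  assumes X: "bounded_op X"
  shows "Re (cinner x (phiA A As I X x)) = infsum (\<lambda>i. Re (cinner (As i x) (X (As i x)))) I"
  using phi_inner[OF X, of x x] infsum_Re[OF phi_inner_sm[OF X, of x x]] by simp

lemma phi_Re_sm:
  assumes X: "bounded_op X"
  shows "(\<lambda>i. Re (cinner (As i x) (X (As i x)))) summable_on I"
  by (rule summable_on_Re[OF phi_inner_sm[OF X]])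

lemma phi_psa:
  assumes X: "psa X" shows "psa (phiA A As I X)"
proof -
  have bo: "bounded_op X" and ad: "is_adjoint X X" and pos: "\<And>z. 0 \<le> Re (cinner z (X z))"
    using X unfolding psa_def by auto
  have a: "is_adjoint (phiA A As I X) (phiA A As I X)"
    unfolding is_adjoint_def
  proof (intro allI)
    fix x y
    have "cinner (phiA A As I X x) y = infsum (\<lambda>i. cinner (X (As i x)) (As i y)) I"
      by (rule phi_inner_left[OF bo])
    also have "\<dots> = infsum (\<lambda>i. cinner (As i x) (X (As i y))) I"
      by (simp only: adj_sym[OF ad])
    also have "\<dots> = cinner x (phiA A As I X y)" by (rule phi_inner[OF bo, symmetric])
    finally show "cinner (phiA A As I X x) y = cinner x (phiA A As I X y)" .
  qed
  have p: "0 \<le> Re (cinner x (phiA A As I X x))" for x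
    unfolding phi_Re[OF bo] by (rule infsum_nonneg) (rule pos)
  show ?thesis unfolding psa_def using phi_bop[OF bo] a p by blast
qed

lemma phi_nb:
  assumes X: "bounded_op X" and nb: "\<And>z. norm (X z) \<le> norm z"
  shows "norm (phiA A As I X x) \<le> norm x"
proof -
  have "onorm X \<le> 1" by (rule onorm_bound) (simp_all add: nb)
  then have o: "onorm (phiA A As I X) \<le> 1" by (rule contr[OF X])
  have "norm (phiA A As I X x) \<le> onorm (phiA A As I X) * norm x"
    by (rule onorm[OF bop_bl[OF phi_bop[OF X]]])
  also have "\<dots> \<le> 1 * norm x" by (rule mult_right_mono[OF o norm_ge_zero])
  finally show ?thesis by simp
qed

lemma phi_mono:
  assumes X: "bounded_op X" and Y: "bounded_op Y"
    and le: "\<And>z. Re (cinner z (X z)) \<le> Re (cinner z (Y z))"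
  shows "Re (cinner x (phiA A As I X x)) \<le> Re (cinner x (phiA A As I Y x))"
  unfolding phi_Re[OF X] phi_Re[OF Y]
  by (rule infsum_mono[OF phi_Re_sm[OF X] phi_Re_sm[OF Y]]) (rule le)

definition Xk :: "nat \<Rightarrow> 'a \<Rightarrow> 'a" where "Xk k = (phiA A As I ^^ k) id"

lemma Xk_0: "Xk 0 = id" by (simp add: Xk_def)
lemma Xk_Suc: "Xk (Suc k) = phiA A As I (Xk k)" by (simp add: Xk_def)

lemma Xk_props: "psa (Xk k) \<and> (\<forall>z. norm (Xk k z) \<le> norm z)"
proof (induction k)
  case 0 show ?case unfolding Xk_0 by (rule conjI[OF psa_id]) simp
next
  case (Suc k)
  then have p: "psa (Xk k)" and n: "\<And>z. norm (Xk k z) \<le> norm z" by auto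
  have bo: "bounded_op (Xk k)" using p unfolding psa_def by blast
  show ?case unfolding Xk_Suc using phi_psa[OF p] phi_nb[OF bo n] by blast
qed

lemma Xk_dec: "Re (cinner x (Xk (Suc k) x)) \<le> Re (cinner x (Xk k x))"
proof (induction k arbitrary: x)
  case 0
  have "Re (cinner x (phiA A As I id x)) \<le> Re (cinner x (id x))"
  proof -
    have "\<And>z. norm (phiA A As I id z) \<le> norm z" by (rule phi_nb[OF bop_id]) simp
    then show ?thesis using psa_le_id[where E="phiA A As I id"] by simp
  qed
  then show ?case by (simp add: Xk_Suc Xk_0)
next
  case (Suc k)
  have b1: "bounded_op (Xk (Suc k))" and b2: "bounded_op (Xk k)"
    using Xk_props unfolding psa_def by blast+
  show ?case unfolding Xk_Suc[of "Suc k"] Xk_Suc[of k]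
    using phi_mono[OF b1[unfolded Xk_Suc] b2 Suc.IH[unfolded Xk_Suc]] .
qed

end



lemma term_le_infsum:
  fixes g :: "'i \<Rightarrow> real"
  assumes sm: "g summable_on I" and nn: "\<And>i. i \<in> I \<Longrightarrow> 0 \<le> g i" and j: "j \<in> I"
  shows "g j \<le> infsum g I"
proof -
  have "infsum g {j} \<le> infsum g I"
  proof (rule infsum_mono_neutral)
    show "g summable_on {j}" by simp
    show "g summable_on I" by (rule sm)
    show "g x \<le> g x" if "x \<in> {j} \<inter> I" for x by simp
    show "g x \<le> 0" if "x \<in> {j} - I" for x using that j by simp
    show "0 \<le> g x" if "x \<in> I - {j}" for x using that nn by simp
  qed
  then show ?thesis by simp
qed

lemma infsum_diff_real:
  fixes a b :: "'i \<Rightarrow> real"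
  assumes a: "a summable_on I" and b: "b summable_on I"
  shows "(\<lambda>i. a i - b i) summable_on I \<and> infsum (\<lambda>i. a i - b i) I = infsum a I - infsum b I"
proof -
  have hb: "((\<lambda>i. - b i) has_sum (- infsum b I)) I"
    using has_sum_infsum[OF b] by (simp add: has_sum_uminus)
  have "((\<lambda>i. a i + - b i) has_sum (infsum a I + - infsum b I)) I"
    by (rule has_sum_add[OF has_sum_infsum[OF a] hb])
  then have h: "((\<lambda>i. a i - b i) has_sum (infsum a I - infsum b I)) I" by simp
  show ?thesis using h infsumI[OF h] summable_on_def by blast
qed

lemma ker_diff_iff: "x \<in> ker_op (id - D) \<longleftrightarrow> D x = x"
  unfolding ker_op_def by (auto simp: fun_diff_def)

lemma ker_iff: "x \<in> ker_op D \<longleftrightarrow> D x = 0"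
  unfolding ker_op_def by simp

context phisetup
begin

lemma main:
  "\<exists>D. bounded_op D \<and> (\<forall>x. (\<lambda>k. ((phiA A As I ^^ k) id) x) \<longlonglongrightarrow> D x)
     \<and> (\<forall>x\<in>ker_op (id - D). \<forall>y\<in>ker_op D. cinner x y = 0)
     \<and> (\<forall>x. \<exists>m a b. x = m + a + b \<and> a \<in> ker_op (id - D) \<and> b \<in> ker_op D
            \<and> (\<forall>y\<in>ker_op (id - D) \<union> ker_op D. cinner m y = 0))
     \<and> (\<forall>i\<in>I. As i ` ker_op (id - D) \<subseteq> ker_op (id - D) \<and> As i ` ker_op D \<subseteq> ker_op D)
     \<and> (orth_projection D \<longrightarrow>
          (\<forall>x. \<exists>a b. x = a + b \<and> a \<in> ker_op (id - D) \<and> b \<in> ker_op D)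
        \<and> (\<forall>i\<in>I. A i ` ker_op (id - D) \<subseteq> ker_op (id - D) \<and> A i ` ker_op D \<subseteq> ker_op D
               \<and> As i ` ker_op (id - D) \<subseteq> ker_op (id - D) \<and> As i ` ker_op D \<subseteq> ker_op D))"
proof -
  have Xp: "\<And>k. psa (Xk k)" and Xn: "\<And>k z. norm (Xk k z) \<le> norm z"
    using Xk_props by auto
  have Xb: "\<And>k. bounded_op (Xk k)" using Xp unfolding psa_def by blast
  obtain D where Dp: "psa D" and Dn: "\<And>z. norm (D z) \<le> norm z"
      and Dlim: "\<And>x. (\<lambda>k. Xk k x) \<longlonglongrightarrow> D x"
      and Dle: "\<And>k z. Re (cinner z (D z)) \<le> Re (cinner z (Xk k z))"
    using mcl[where Y=Xk, OF Xp Xn Xk_dec] by blast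
  have bo: "bounded_op D" and ad: "is_adjoint D D" and Dpos: "\<And>z. 0 \<le> Re (cinner z (D z))"
    using Dp unfolding psa_def by auto
  have adl: "cinner (D u) v = cinner u (D v)" for u v using ad unfolding is_adjoint_def by blast
  have lim1: "\<forall>x. (\<lambda>k. ((phiA A As I ^^ k) id) x) \<longlonglongrightarrow> D x"
    using Dlim unfolding Xk_def by blast
  have orth: "cinner x y = 0" if "D x = x" "D y = 0" for x y
  proof -
    have "cinner x y = cinner (D x) y" using that(1) by simp
    also have "\<dots> = cinner x (D y)" by (rule adl)
    also have "\<dots> = 0" using that(2) by simp
    finally show ?thesis .
  qed
  have qlim: "(\<lambda>k. Re (cinner z (Xk k z))) \<longlonglongrightarrow> Re (cinner z (D z))" for z
    by (intro tendsto_Re bounded_linear.tendsto[OF bl_cinner_right Dlim])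
  have phiX: "Re (cinner x (Xk (Suc k) x)) = infsum (\<lambda>i. Re (cinner (As i x) (Xk k (As i x)))) I" for x k
    unfolding Xk_Suc by (rule phi_Re[OF Xb])
  have inv0: "D (As j x) = 0" if j: "j \<in> I" and x: "D x = 0" for j x
  proof -
    define y where "y = As j x"
    have "Re (cinner y (D y)) \<le> Re (cinner x (D x))"
    proof (rule LIMSEQ_le_const[OF LIMSEQ_Suc[OF qlim[of x]]], intro exI allI impI)
      fix k :: nat
      have "Re (cinner y (D y)) \<le> Re (cinner y (Xk k y))" by (rule Dle)
      also have "\<dots> \<le> infsum (\<lambda>i. Re (cinner (As i x) (Xk k (As i x)))) I"
      proof -
        have nn0: "\<And>i. i \<in> I \<Longrightarrow> 0 \<le> Re (cinner (As i x) (Xk k (As i x)))"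
          using Xp unfolding psa_def by blast
        have sm0: "(\<lambda>i. Re (cinner (As i x) (Xk k (As i x)))) summable_on I" by (rule phi_Re_sm[OF Xb])
        show ?thesis unfolding y_def using term_le_infsum[where g="\<lambda>i. Re (cinner (As i x) (Xk k (As i x)))" and I=I and j=j] sm0 nn0 j by simp
      qed
      also have "\<dots> = Re (cinner x (Xk (Suc k) x))" by (rule phiX[symmetric])
      finally show "Re (cinner y (D y)) \<le> Re (cinner x (Xk (Suc k) x))" .
    qed
    then have "Re (cinner y (D y)) \<le> 0" using x by simp
    then have "Re (cinner y (D y)) = 0" using Dpos[of y] by linarith
    then show ?thesis using psa_zero[OF Dp] y_def by blast
  qed
  have cpc: "psa (id - D) \<and> (\<forall>z. norm ((id - D) z) \<le> norm z)" by (rule cp_compl[OF Dp Dn])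
  have inv1: "D (As j x) = As j x" if j: "j \<in> I" and x: "D x = x" for j x
  proof -
    define y where "y = As j x"
    define a where "a i = Re (cinner (As i x) (As i x))" for i
    have asm: "a summable_on I" unfolding a_def using phi_Re_sm[OF bop_id, of x] by simp
    have asum: "infsum a I \<le> Re (cinner x x)"
    proof -
      have "infsum a I = Re (cinner x (Xk 1 x))"
        unfolding a_def using phiX[of x 0] by (simp add: Xk_0)
      also have "\<dots> \<le> Re (cinner x (Xk 0 x))" using Xk_dec[of x 0] by simp
      finally show ?thesis by (simp add: Xk_0)
    qed
    have step: "Re (cinner y y) \<le> Re (cinner y (Xk k y))" for k
    proof -
      define b where "b i = Re (cinner (As i x) (Xk k (As i x)))" for i
      have bsm: "b summable_on I" unfolding b_def by (rule phi_Re_sm[OF Xb])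
      have bsum: "Re (cinner x x) \<le> infsum b I"
      proof -
        have "Re (cinner x x) = Re (cinner x (D x))" using x by simp
        also have "\<dots> \<le> Re (cinner x (Xk (Suc k) x))" by (rule Dle)
        also have "\<dots> = infsum b I" unfolding b_def by (rule phiX)
        finally show ?thesis .
      qed
      have d: "(\<lambda>i. a i - b i) summable_on I \<and> infsum (\<lambda>i. a i - b i) I = infsum a I - infsum b I"
        by (rule infsum_diff_real[OF asm bsm])
      have nn: "0 \<le> a i - b i" for i
        unfolding a_def b_def using psa_le_id[OF Xn, of "As i x"] by simp
      have "a j - b j \<le> infsum (\<lambda>i. a i - b i) I"
      proof -
        have nn': "\<And>i. i \<in> I \<Longrightarrow> 0 \<le> a i - b i" by (rule nn)
        show ?thesis using term_le_infsum[OF conjunct1[OF d] nn' j] by simp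
      qed
      also have "\<dots> \<le> 0" using conjunct2[OF d] asum bsum by linarith
      finally show ?thesis unfolding a_def b_def y_def by simp
    qed
    have "Re (cinner y y) \<le> Re (cinner y (D y))"
      by (rule LIMSEQ_le_const[OF qlim[of y]]) (use step in blast)
    then have "Re (cinner y ((id - D) y)) = 0"
      using psa_le_id[OF Dn, of y] by (simp add: cinner_diff_right)
    then have "(id - D) y = 0" using psa_zero cpc by blast
    then show ?thesis unfolding y_def by simp
  qed
  have invAs: "\<forall>i\<in>I. As i ` ker_op (id - D) \<subseteq> ker_op (id - D) \<and> As i ` ker_op D \<subseteq> ker_op D"
    using inv0 inv1 by (auto simp: ker_diff_iff ker_iff)
  obtain P1 where P1: "psa P1" "\<And>x. D (P1 x) = P1 x" "\<And>y. D y = y \<Longrightarrow> P1 y = y"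
      "\<And>y. D y = 0 \<Longrightarrow> P1 y = 0"
    using pow_lim[OF Dp Dn] by blast
  obtain P0 where P0: "psa P0" "\<And>x. (id - D) (P0 x) = P0 x" "\<And>y. (id - D) y = y \<Longrightarrow> P0 y = y"
      "\<And>y. (id - D) y = 0 \<Longrightarrow> P0 y = 0"
    using pow_lim[of "id - D"] cpc by blast
  have P0a: "D (P0 x) = 0" for x using P0(2)[of x] by simp
  have P0b: "D y = 0 \<Longrightarrow> P0 y = y" for y using P0(3)[of y] by simp
  have P0c: "D y = y \<Longrightarrow> P0 y = 0" for y using P0(4)[of y] by simp
  have adP1: "cinner (P1 u) v = cinner u (P1 v)" for u v using P1(1) unfolding psa_def is_adjoint_def by blast
  have adP0: "cinner (P0 u) v = cinner u (P0 v)" for u v using P0(1) unfolding psa_def is_adjoint_def by blast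
  have dec: "\<exists>m a b. x = m + a + b \<and> a \<in> ker_op (id - D) \<and> b \<in> ker_op D
            \<and> (\<forall>y\<in>ker_op (id - D) \<union> ker_op D. cinner m y = 0)" for x
  proof (intro exI conjI ballI)
    show "x = (x - P1 x - P0 x) + P1 x + P0 x" by simp
    show "P1 x \<in> ker_op (id - D)" unfolding ker_diff_iff by (rule P1(2))
    show "P0 x \<in> ker_op D" unfolding ker_iff by (rule P0a)
    fix y assume "y \<in> ker_op (id - D) \<union> ker_op D"
    then have y: "D y = y \<or> D y = 0" using ker_diff_iff[of y D] ker_iff[of y D] by blast
    have "cinner (x - P1 x - P0 x) y = cinner x y - cinner x (P1 y) - cinner x (P0 y)"
      by (simp add: cinner_diff_left adP1 adP0)
    also have "\<dots> = 0"
      using y P1(3)[of y] P1(4)[of y] P0b[of y] P0c[of y] by auto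
    finally show "cinner (x - P1 x - P0 x) y = 0" .
  qed
  have proj: "(\<forall>x. \<exists>a b. x = a + b \<and> a \<in> ker_op (id - D) \<and> b \<in> ker_op D)
        \<and> (\<forall>i\<in>I. A i ` ker_op (id - D) \<subseteq> ker_op (id - D) \<and> A i ` ker_op D \<subseteq> ker_op D
               \<and> As i ` ker_op (id - D) \<subseteq> ker_op (id - D) \<and> As i ` ker_op D \<subseteq> ker_op D)"
    if op: "orth_projection D"
  proof -
    have DD: "D (D x) = D x" for x
      using op unfolding orth_projection_def by (metis comp_apply)
    have dec2: "\<exists>a b. x = a + b \<and> a \<in> ker_op (id - D) \<and> b \<in> ker_op D" for x
    proof (intro exI conjI)
      show "x = D x + (x - D x)" by simp
      show "D x \<in> ker_op (id - D)" unfolding ker_diff_iff by (rule DD)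
      show "x - D x \<in> ker_op D" unfolding ker_iff by (simp add: bop_diff[OF bo] DD)
    qed
    have A1: "D (A i a) = A i a" if i: "i \<in> I" and a: "D a = a" for i a
    proof -
      define z where "z = A i a"
      define w where "w = z - D z"
      have Dw: "D w = 0" unfolding w_def by (simp add: bop_diff[OF bo] DD)
      have zw: "cinner z w = 0"
      proof -
        have "cinner z w = cinner a (As i w)" unfolding z_def by (rule adjA2[OF i])
        also have "\<dots> = 0" by (rule orth[OF a inv0[OF i Dw]])
        finally show ?thesis .
      qed
      have "cinner (D z) w = cinner z (D w)" by (rule adl)
      then have Dzw: "cinner (D z) w = 0" using Dw by simp
      have "cinner w w = cinner z w - cinner (D z) w" unfolding w_def by (simp add: cinner_diff_left)
      then have "cinner w w = 0" using zw Dzw by simp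
      then have "w = 0" using cinner_eq_zero_iff by blast
      then show ?thesis unfolding w_def z_def by simp
    qed
    have A0: "D (A i b) = 0" if i: "i \<in> I" and b: "D b = 0" for i b
    proof -
      define z where "z = A i b"
      have "cinner z (D z) = cinner b (As i (D z))" unfolding z_def by (rule adjA2[OF i])
      also have "\<dots> = cnj (cinner (As i (D z)) b)" by (rule cinner_commute)
      also have "cinner (As i (D z)) b = 0" by (rule orth[OF inv1[OF i DD] b])
      finally have zDz: "cinner z (D z) = 0" by simp
      have "cinner (D z) (D z) = cinner z (D (D z))" by (rule adl)
      then have "cinner (D z) (D z) = 0" using zDz DD by simp
      then show ?thesis unfolding z_def using cinner_eq_zero_iff by blast
    qed
    have invA: "\<forall>i\<in>I. A i ` ker_op (id - D) \<subseteq> ker_op (id - D) \<and> A i ` ker_op D \<subseteq> ker_op D"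
      using A1 A0 by (auto simp: ker_diff_iff ker_iff)
    show ?thesis using dec2 invA invAs by blast
  qed
  show ?thesis
    using bo lim1 orth dec invAs proj
    by (intro exI[of _ D] conjI) (auto simp: ker_diff_iff ker_iff)
qed

end



theorem theorem4p7:
  fixes A As :: "nat \<Rightarrow> 'a::chilbert_space \<Rightarrow> 'a" and I :: "nat set"
  assumes bnd: "\<And>i. i \<in> I \<Longrightarrow> bounded_op (A i)"
    and adj: "\<And>i. i \<in> I \<Longrightarrow> is_adjoint (A i) (As i)"
    and welldef: "\<And>X x. bounded_op X \<Longrightarrow> (\<lambda>i. A i (X (As i x))) summable_on I"
    and contr: "\<And>X. bounded_op X \<Longrightarrow> onorm X \<le> 1 \<Longrightarrow> onorm (phiA A As I X) \<le> 1"
  shows "\<exists>D. bounded_op D \<and> (\<forall>x. (\<lambda>k. ((phiA A As I ^^ k) id) x) \<longlonglongrightarrow> D x)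
     \<and> (\<forall>x\<in>ker_op (id - D). \<forall>y\<in>ker_op D. cinner x y = 0)
     \<and> (\<forall>x. \<exists>m a b. x = m + a + b \<and> a \<in> ker_op (id - D) \<and> b \<in> ker_op D
            \<and> (\<forall>y\<in>ker_op (id - D) \<union> ker_op D. cinner m y = 0))
     \<and> (\<forall>i\<in>I. As i ` ker_op (id - D) \<subseteq> ker_op (id - D) \<and> As i ` ker_op D \<subseteq> ker_op D)
     \<and> (orth_projection D \<longrightarrow>
          (\<forall>x. \<exists>a b. x = a + b \<and> a \<in> ker_op (id - D) \<and> b \<in> ker_op D)
        \<and> (\<forall>i\<in>I. A i ` ker_op (id - D) \<subseteq> ker_op (id - D) \<and> A i ` ker_op D \<subseteq> ker_op D
               \<and> As i ` ker_op (id - D) \<subseteq> ker_op (id - D) \<and> As i ` ker_op D \<subseteq> ker_op D))"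
proof -
  have "phisetup A As I"
    by (rule phisetup.intro[OF bnd adj welldef contr])
  then show ?thesis by (rule phisetup.main)
qed

end
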